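(* Let $p$ be a prime, let $\mathcal{F}$ be a saturated fusion system on a finite $p$-group $S$, and let $G$ be a finite group which contains $S$ as a subgroup and realizes $\mathcal{F}$. Consider the square matrix \[ \bigl( |P\backslash G /Q| \bigr)_{P,Q}, \] whose rows and columns are indexed by the $G$-conjugacy classes of subgroups of $S$ and whose $(P,Q)$-entry is the number of $(P,Q)$-double cosets in $G$. Then the rank of this matrix (over $\mathbb{Q}$) is equal to the number of $\mathcal{F}$-conjugacy classes of cyclic subgroups of $S$.
   Context: A fusion system $\mathcal{F}$ on a finite $p$-group $S$ is a category whose objects are the subgroups of $S$ and whose morphisms $P\to Q$ are certain injective group homomorphisms, containing all maps induced by conjugation by elements of $S$ and closed under restriction and inverses of isomorphisms; "saturated" is the standard saturation axiom (Sylow-type axioms) of Broto–Levi–Oliver. Two subgroups $P,P'\leq S$ are $\mathcal{F}$-conjugate if there is an isomorphism $P\to P'$ in $\mathcal{F}$. A finite group $G$ containing $S$ (not necessarily as a Sylow subgroup) realizes $\mathcal{F}$ if for all $P,Q\leq S$ the morphisms $P\to Q$ in $\mathcal{F}$ are exactly the maps $u\mapsto gug^{-1}$ for $g\in G$ with $gPg^{-1}\leq Q$. In particular, two subgroups of $S$ are $G$-conjugate iff they are $\mathcal{F}$-conjugate. *)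

theory Defs
  imports "HOL-Algebra.Algebra" "Jordan_Normal_Form.DL_Rank"
begin

definition conjm :: "('a, 'b) monoid_scheme \<Rightarrow> 'a \<Rightarrow> 'a \<Rightarrow> 'a" where
  "conjm G g u = g \<otimes>\<^bsub>G\<^esub> u \<otimes>\<^bsub>G\<^esub> inv\<^bsub>G\<^esub> g"

definition cmap :: "('a, 'b) monoid_scheme \<Rightarrow> 'a \<Rightarrow> 'a set \<Rightarrow> ('a \<Rightarrow> 'a)" where
  "cmap G g P = restrict (conjm G g) P"

definition subs :: "('a, 'b) monoid_scheme \<Rightarrow> 'a set \<Rightarrow> 'a set set" where
  "subs G S = {P. subgroup P G \<and> P \<subseteq> S}"

definition normalizer_in :: "('a, 'b) monoid_scheme \<Rightarrow> 'a set \<Rightarrow> 'a set \<Rightarrow> 'a set" where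
  "normalizer_in G S P = {s \<in> S. conjm G s ` P = P}"

definition centralizer_in :: "('a, 'b) monoid_scheme \<Rightarrow> 'a set \<Rightarrow> 'a set \<Rightarrow> 'a set" where
  "centralizer_in G S P = {s \<in> S. \<forall>x\<in>P. s \<otimes>\<^bsub>G\<^esub> x = x \<otimes>\<^bsub>G\<^esub> s}"

definition double_cosets :: "('a, 'b) monoid_scheme \<Rightarrow> 'a set \<Rightarrow> 'a set \<Rightarrow> 'a set set" where
  "double_cosets G P Q =
     (\<lambda>g. {x \<otimes>\<^bsub>G\<^esub> g \<otimes>\<^bsub>G\<^esub> y | x y. x \<in> P \<and> y \<in> Q}) ` carrier G"

text \<open>A fusion system on S is given by its morphism sets Hom P Q (for P, Q subgroups
  of S); morphisms are injective homomorphisms P -> Q, represented as extensional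
  functions on P.\<close>

definition inj_hom_on :: "('a, 'b) monoid_scheme \<Rightarrow> 'a set \<Rightarrow> 'a set \<Rightarrow> ('a \<Rightarrow> 'a) \<Rightarrow> bool" where
  "inj_hom_on G P Q \<phi> \<longleftrightarrow> \<phi> \<in> extensional P \<and> \<phi> ` P \<subseteq> Q \<and> inj_on \<phi> P \<and>
     (\<forall>x\<in>P. \<forall>y\<in>P. \<phi> (x \<otimes>\<^bsub>G\<^esub> y) = \<phi> x \<otimes>\<^bsub>G\<^esub> \<phi> y)"

definition fusion_system ::
  "('a, 'b) monoid_scheme \<Rightarrow> 'a set \<Rightarrow> ('a set \<Rightarrow> 'a set \<Rightarrow> ('a \<Rightarrow> 'a) set) \<Rightarrow> bool" where
  "fusion_system G S Hom \<longleftrightarrow>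
     (\<forall>P Q. (P \<notin> subs G S \<or> Q \<notin> subs G S) \<longrightarrow> Hom P Q = {}) \<and>
     (\<forall>P\<in>subs G S. \<forall>Q\<in>subs G S. \<forall>\<phi>\<in>Hom P Q. inj_hom_on G P Q \<phi>) \<and>
     \<comment> \<open>contains the conjugation maps by elements of S\<close>
     (\<forall>P\<in>subs G S. \<forall>Q\<in>subs G S. \<forall>s\<in>S. conjm G s ` P \<subseteq> Q \<longrightarrow> cmap G s P \<in> Hom P Q) \<and>
     \<comment> \<open>closed under composition\<close>
     (\<forall>P Q R \<phi> \<psi>. \<phi> \<in> Hom P Q \<longrightarrow> \<psi> \<in> Hom Q R \<longrightarrow> restrict (\<psi> \<circ> \<phi>) P \<in> Hom P R) \<and>
     \<comment> \<open>closed under restriction (in domain and codomain)\<close>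
     (\<forall>P Q P' Q' \<phi>. \<phi> \<in> Hom P Q \<longrightarrow> P' \<in> subs G S \<longrightarrow> Q' \<in> subs G S \<longrightarrow> P' \<subseteq> P \<longrightarrow>
        \<phi> ` P' \<subseteq> Q' \<longrightarrow> restrict \<phi> P' \<in> Hom P' Q') \<and>
     \<comment> \<open>closed under inverses of isomorphisms\<close>
     (\<forall>P Q \<phi>. \<phi> \<in> Hom P Q \<longrightarrow> \<phi> ` P = Q \<longrightarrow> restrict (inv_into P \<phi>) Q \<in> Hom Q P)"

definition F_conjugate ::
  "('a set \<Rightarrow> 'a set \<Rightarrow> ('a \<Rightarrow> 'a) set) \<Rightarrow> 'a set \<Rightarrow> 'a set \<Rightarrow> bool" where
  "F_conjugate Hom P Q \<longleftrightarrow> (\<exists>\<phi>\<in>Hom P Q. \<phi> ` P = Q)"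

definition fully_normalized ::
  "('a, 'b) monoid_scheme \<Rightarrow> 'a set \<Rightarrow> ('a set \<Rightarrow> 'a set \<Rightarrow> ('a \<Rightarrow> 'a) set) \<Rightarrow> 'a set \<Rightarrow> bool" where
  "fully_normalized G S Hom P \<longleftrightarrow> P \<in> subs G S \<and>
     (\<forall>P'. F_conjugate Hom P P' \<longrightarrow> card (normalizer_in G S P') \<le> card (normalizer_in G S P))"

definition fully_centralized ::
  "('a, 'b) monoid_scheme \<Rightarrow> 'a set \<Rightarrow> ('a set \<Rightarrow> 'a set \<Rightarrow> ('a \<Rightarrow> 'a) set) \<Rightarrow> 'a set \<Rightarrow> bool" where
  "fully_centralized G S Hom P \<longleftrightarrow> P \<in> subs G S \<and>
     (\<forall>P'. F_conjugate Hom P P' \<longrightarrow> card (centralizer_in G S P') \<le> card (centralizer_in G S P))"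

definition Aut_S :: "('a, 'b) monoid_scheme \<Rightarrow> 'a set \<Rightarrow> 'a set \<Rightarrow> ('a \<Rightarrow> 'a) set" where
  "Aut_S G S P = (\<lambda>s. cmap G s P) ` normalizer_in G S P"

definition N_phi ::
  "('a, 'b) monoid_scheme \<Rightarrow> 'a set \<Rightarrow> 'a set \<Rightarrow> ('a \<Rightarrow> 'a) \<Rightarrow> 'a set" where
  "N_phi G S P \<phi> = {g \<in> normalizer_in G S P. \<exists>h \<in> normalizer_in G S (\<phi> ` P).
      \<forall>y \<in> \<phi> ` P. \<phi> (conjm G g (inv_into P \<phi> y)) = conjm G h y}"

text \<open>Saturation in the sense of Broto--Levi--Oliver.\<close>
definition saturated ::
  "nat \<Rightarrow> ('a, 'b) monoid_scheme \<Rightarrow> 'a set \<Rightarrow> ('a set \<Rightarrow> 'a set \<Rightarrow> ('a \<Rightarrow> 'a) set) \<Rightarrow> bool" where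
  "saturated p G S Hom \<longleftrightarrow>
     \<comment> \<open>Axiom (I): fully normalized implies fully centralized and Aut_S(P) Sylow in Aut_F(P)\<close>
     (\<forall>P. fully_normalized G S Hom P \<longrightarrow>
        fully_centralized G S Hom P \<and>
        Aut_S G S P \<subseteq> Hom P P \<and>
        (\<exists>m. card (Hom P P) = card (Aut_S G S P) * m \<and> \<not> p dvd m)) \<and>
     \<comment> \<open>Axiom (II): extension of isomorphisms to N_phi when the target is fully centralized\<close>
     (\<forall>P \<phi>. \<phi> \<in> Hom P (\<phi> ` P) \<longrightarrow> fully_centralized G S Hom (\<phi> ` P) \<longrightarrow>
        (\<exists>\<psi> \<in> Hom (N_phi G S P \<phi>) S. \<forall>x\<in>P. \<psi> x = \<phi> x))"

definition realizes ::
  "('a, 'b) monoid_scheme \<Rightarrow> 'a set \<Rightarrow> ('a set \<Rightarrow> 'a set \<Rightarrow> ('a \<Rightarrow> 'a) set) \<Rightarrow> bool" where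
  "realizes G S Hom \<longleftrightarrow> (\<forall>P\<in>subs G S. \<forall>Q\<in>subs G S.
     Hom P Q = {cmap G g P | g. g \<in> carrier G \<and> conjm G g ` P \<subseteq> Q})"

definition G_conj_classes :: "('a, 'b) monoid_scheme \<Rightarrow> 'a set \<Rightarrow> 'a set set set" where
  "G_conj_classes G S = subs G S //
     {(P, Q). P \<in> subs G S \<and> Q \<in> subs G S \<and> (\<exists>g\<in>carrier G. Q = conjm G g ` P)}"

text \<open>Matrix (|P\G/Q|)_{P,Q} over the rationals, with rows/columns indexed by the
  G-conjugacy classes of subgroups of S via a fixed enumeration of these classes, and
  entries computed at a chosen representative of each class.\<close>
definition double_coset_matrix :: "('a, 'b) monoid_scheme \<Rightarrow> 'a set \<Rightarrow> rat mat" where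
  "double_coset_matrix G S =
     (let Cl = G_conj_classes G S; k = card Cl;
          e = (SOME e. bij_betw e {0..<k} Cl);
          rep = (\<lambda>C. SOME P. P \<in> C)
      in mat k k (\<lambda>(i, j). of_nat (card (double_cosets G (rep (e i)) (rep (e j))))))"

definition cyclic_subs :: "('a, 'b) monoid_scheme \<Rightarrow> 'a set \<Rightarrow> 'a set set" where
  "cyclic_subs G S = {P. \<exists>x\<in>S. P = generate G {x}}"

definition F_classes_cyclic ::
  "('a, 'b) monoid_scheme \<Rightarrow> 'a set \<Rightarrow> ('a set \<Rightarrow> 'a set \<Rightarrow> ('a \<Rightarrow> 'a) set) \<Rightarrow> 'a set set set" where
  "F_classes_cyclic G S Hom = cyclic_subs G S //
     {(P, Q). P \<in> cyclic_subs G S \<and> Q \<in> cyclic_subs G S \<and> F_conjugate Hom P Q}"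

end

theory Submission
  imports Defs "Jordan_Normal_Form.DL_Rank_Submatrix"
begin


context group begin

lemma conjm_closed[simp]: "g \<in> carrier G \<Longrightarrow> x \<in> carrier G \<Longrightarrow> conjm G g x \<in> carrier G"
  unfolding conjm_def by simp

lemma conjm_mult: "g \<in> carrier G \<Longrightarrow> h \<in> carrier G \<Longrightarrow> x \<in> carrier G \<Longrightarrow>
   conjm G (g \<otimes> h) x = conjm G g (conjm G h x)"
  unfolding conjm_def by (simp add: inv_mult_group m_assoc)

lemma conjm_one[simp]: "x \<in> carrier G \<Longrightarrow> conjm G \<one> x = x"
  unfolding conjm_def by simp

lemma conjm_inv_cancel[simp]: "g \<in> carrier G \<Longrightarrow> x \<in> carrier G \<Longrightarrow> conjm G (inv g) (conjm G g x) = x"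
  by (metis conjm_mult inv_closed l_inv conjm_one)

lemma conjm_inv_cancel2[simp]: "g \<in> carrier G \<Longrightarrow> x \<in> carrier G \<Longrightarrow> conjm G g (conjm G (inv g) x) = x"
  by (metis conjm_inv_cancel inv_closed inv_inv)

lemma inv_cancel_left_G[simp]: "g \<in> carrier G \<Longrightarrow> z \<in> carrier G \<Longrightarrow> inv g \<otimes> (g \<otimes> z) = z"
  by (simp add: m_assoc[symmetric])

lemma conjm_m: "g \<in> carrier G \<Longrightarrow> x \<in> carrier G \<Longrightarrow> y \<in> carrier G \<Longrightarrow>
   conjm G g (x \<otimes> y) = conjm G g x \<otimes> conjm G g y"
  unfolding conjm_def by (simp add: m_assoc)

lemma conjm_inv: "g \<in> carrier G \<Longrightarrow> x \<in> carrier G \<Longrightarrow> conjm G g (inv x) = inv (conjm G g x)"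
  unfolding conjm_def by (simp add: inv_mult_group m_assoc)

lemma conjm_inj: "g \<in> carrier G \<Longrightarrow> inj_on (conjm G g) (carrier G)"
  by (metis conjm_inv_cancel inj_onI)

lemma conjm_eq_iff: "g \<in> carrier G \<Longrightarrow> x \<in> carrier G \<Longrightarrow> y \<in> carrier G \<Longrightarrow> conjm G g x = conjm G g y \<longleftrightarrow> x = y"
  by (metis conjm_inv_cancel)

lemma conjm_hom: "g \<in> carrier G \<Longrightarrow> conjm G g \<in> hom G G"
  by (rule homI) (auto simp: conjm_m)

lemma conjm_group_hom: "g \<in> carrier G \<Longrightarrow> group_hom G G (conjm G g)"
  by (simp add: conjm_hom group_hom.intro group_hom_axioms.intro is_group)

lemma conjm_generate: "g \<in> carrier G \<Longrightarrow> x \<in> carrier G \<Longrightarrow>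
   conjm G g ` generate G {x} = generate G {conjm G g x}"
  using group_hom.generate_img[OF conjm_group_hom, of g "{x}"] by simp

lemma conjm_subgroup: assumes "g \<in> carrier G" "subgroup P G" shows "subgroup (conjm G g ` P) G"
  using group_hom.subgroup_img_is_subgroup[OF conjm_group_hom[OF assms(1)] assms(2)] .

lemma conjm_img_mult: "g \<in> carrier G \<Longrightarrow> h \<in> carrier G \<Longrightarrow> A \<subseteq> carrier G \<Longrightarrow>
   conjm G (g \<otimes> h) ` A = conjm G g ` conjm G h ` A"
  by (auto simp: conjm_mult image_iff subset_iff)

lemma conjm_img_one: "A \<subseteq> carrier G \<Longrightarrow> conjm G \<one> ` A = A"
  by (auto simp: subset_iff image_iff)

lemma conjm_img_inv: "g \<in> carrier G \<Longrightarrow> A \<subseteq> carrier G \<Longrightarrow> conjm G (inv g) ` conjm G g ` A = A"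
  by (auto simp: subset_iff image_iff)

lemma conjm_img_carrier: "g \<in> carrier G \<Longrightarrow> A \<subseteq> carrier G \<Longrightarrow> conjm G g ` A \<subseteq> carrier G"
  by auto

lemma mem_conjm_img: "g \<in> carrier G \<Longrightarrow> A \<subseteq> carrier G \<Longrightarrow> t \<in> carrier G \<Longrightarrow>
    t \<in> conjm G g ` A \<longleftrightarrow> conjm G (inv g) t \<in> A"
  by (auto simp: image_iff) (metis conjm_inv_cancel2 inv_closed conjm_closed subsetD)

lemma conjm_gen_sub: assumes "h \<in> carrier G" "y \<in> carrier G" "subgroup P G"
  shows "conjm G h ` generate G {y} \<subseteq> P \<longleftrightarrow> conjm G h y \<in> P"
proof
  assume "conjm G h ` generate G {y} \<subseteq> P" then show "conjm G h y \<in> P"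
    using generate.incl[of y "{y}" G] by auto
next
  assume a: "conjm G h y \<in> P"
  have "generate G {conjm G h y} \<subseteq> P" using generate_subgroup_incl[OF _ assms(3)] a by auto
  then show "conjm G h ` generate G {y} \<subseteq> P" using conjm_generate[OF assms(1,2)] by simp
qed


definition DC :: "'a set \<Rightarrow> 'a set \<Rightarrow> 'a \<Rightarrow> 'a set" where
  "DC P Q g = {x \<otimes> g \<otimes> y | x y. x \<in> P \<and> y \<in> Q}"

lemma DC_self: "subgroup P G \<Longrightarrow> subgroup Q G \<Longrightarrow> g \<in> carrier G \<Longrightarrow> g \<in> DC P Q g"
  unfolding DC_def by (rule CollectI, rule exI[of _ \<one>], rule exI[of _ \<one>])
    (simp add: subgroup.one_closed)

lemma DC_sub: "subgroup P G \<Longrightarrow> subgroup Q G \<Longrightarrow> g \<in> carrier G \<Longrightarrow> DC P Q g \<subseteq> carrier G"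
  unfolding DC_def by (auto dest: subgroup.mem_carrier)

lemma inv_cancel_left_G2[simp]: "g \<in> carrier G \<Longrightarrow> z \<in> carrier G \<Longrightarrow> g \<otimes> (inv g \<otimes> z) = z"
  by (simp add: m_assoc[symmetric])



lemma DC_eq: assumes P: "subgroup P G" and Q: "subgroup Q G" and g: "g \<in> carrier G"
  and g': "g' \<in> DC P Q g" shows "DC P Q g' = DC P Q g"
proof -
  have "\<exists>x y. g' = x \<otimes> g \<otimes> y \<and> x \<in> P \<and> y \<in> Q" using g' unfolding DC_def by simp
  then obtain x0 y0 where x0: "x0 \<in> P" and y0: "y0 \<in> Q" and e: "g' = x0 \<otimes> g \<otimes> y0"
    by blast
  have cx0: "x0 \<in> carrier G" using subgroup.mem_carrier[OF P x0] .
  have cy0: "y0 \<in> carrier G" using subgroup.mem_carrier[OF Q y0] .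
  show ?thesis
  proof (rule equalityI; rule subsetI)
    fix z assume "z \<in> DC P Q g'"
    then have "\<exists>x y. z = x \<otimes> g' \<otimes> y \<and> x \<in> P \<and> y \<in> Q" unfolding DC_def by simp
    then obtain x y where x: "x \<in> P" and y: "y \<in> Q" and z: "z = x \<otimes> g' \<otimes> y" by blast
    have cx: "x \<in> carrier G" using subgroup.mem_carrier[OF P x] .
    have cy: "y \<in> carrier G" using subgroup.mem_carrier[OF Q y] .
    have "z = (x \<otimes> x0) \<otimes> g \<otimes> (y0 \<otimes> y)" unfolding z e using cx cy cx0 cy0 g by (simp add: m_assoc)
    moreover have "x \<otimes> x0 \<in> P" using subgroup.m_closed[OF P x x0] .
    moreover have "y0 \<otimes> y \<in> Q" using subgroup.m_closed[OF Q y0 y] .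
    ultimately show "z \<in> DC P Q g" unfolding DC_def by auto
  next
    fix z assume "z \<in> DC P Q g"
    then have "\<exists>x y. z = x \<otimes> g \<otimes> y \<and> x \<in> P \<and> y \<in> Q" unfolding DC_def by simp
    then obtain x y where x: "x \<in> P" and y: "y \<in> Q" and z: "z = x \<otimes> g \<otimes> y" by blast
    have cx: "x \<in> carrier G" using subgroup.mem_carrier[OF P x] .
    have cy: "y \<in> carrier G" using subgroup.mem_carrier[OF Q y] .
    have "z = (x \<otimes> inv x0) \<otimes> g' \<otimes> (inv y0 \<otimes> y)" unfolding z e using cx cy cx0 cy0 g
      by (simp add: m_assoc)
    moreover have "x \<otimes> inv x0 \<in> P" using subgroup.m_closed[OF P x subgroup.m_inv_closed[OF P x0]] .
    moreover have "inv y0 \<otimes> y \<in> Q" using subgroup.m_closed[OF Q subgroup.m_inv_closed[OF Q y0] y] .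
    ultimately show "z \<in> DC P Q g'" unfolding DC_def by auto
  qed
qed

lemma DC_fiber: assumes P: "subgroup P G" and Q: "subgroup Q G" and g: "g \<in> carrier G"
  and x0: "x0 \<in> P" and y0: "y0 \<in> Q"
  shows "{pq \<in> P \<times> Q. fst pq \<otimes> g \<otimes> snd pq = x0 \<otimes> g \<otimes> y0} =
     (\<lambda>q. (x0 \<otimes> conjm G g q, inv q \<otimes> y0)) ` {q \<in> Q. conjm G g q \<in> P}"
    (is "?F = ?phi ` ?K")
proof (rule equalityI; rule subsetI)
  have cx0: "x0 \<in> carrier G" using subgroup.mem_carrier[OF P x0] .
  have cy0: "y0 \<in> carrier G" using subgroup.mem_carrier[OF Q y0] .
  fix pq assume "pq \<in> ?F"
  then obtain x y where pq: "pq = (x, y)" and x: "x \<in> P" and y: "y \<in> Q" and h: "x \<otimes> g \<otimes> y = x0 \<otimes> g \<otimes> y0"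
    by (cases pq) auto
  have cx: "x \<in> carrier G" using subgroup.mem_carrier[OF P x] .
  have cy: "y \<in> carrier G" using subgroup.mem_carrier[OF Q y] .
  define q where "q = y0 \<otimes> inv y"
  have qQ: "q \<in> Q" unfolding q_def using subgroup.m_closed[OF Q y0 subgroup.m_inv_closed[OF Q y]] .
  have cq: "q \<in> carrier G" unfolding q_def using cy cy0 by simp
  have "inv x0 \<otimes> x = inv x0 \<otimes> (x \<otimes> g \<otimes> y) \<otimes> inv y \<otimes> inv g"
    using cx cy cx0 g by (simp add: m_assoc)
  also have "\<dots> = inv x0 \<otimes> (x0 \<otimes> g \<otimes> y0) \<otimes> inv y \<otimes> inv g" using h by simp
  also have "\<dots> = conjm G g q" unfolding conjm_def q_def using cx cy cx0 cy0 g by (simp add: m_assoc)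
  finally have cg: "conjm G g q = inv x0 \<otimes> x" by simp
  have "conjm G g q \<in> P" unfolding cg using subgroup.m_closed[OF P subgroup.m_inv_closed[OF P x0] x] .
  then have qK: "q \<in> ?K" using qQ by simp
  have e1: "x0 \<otimes> conjm G g q = x" unfolding cg using cx cx0 by simp
  have e2: "inv q \<otimes> y0 = y" unfolding q_def using cy cy0 by (simp add: inv_mult_group m_assoc)
  show "pq \<in> ?phi ` ?K" unfolding pq using qK e1 e2 by force
next
  have cx0: "x0 \<in> carrier G" using subgroup.mem_carrier[OF P x0] .
  have cy0: "y0 \<in> carrier G" using subgroup.mem_carrier[OF Q y0] .
  fix pq assume "pq \<in> ?phi ` ?K"
  then obtain q where q: "q \<in> Q" and qP: "conjm G g q \<in> P" and pq: "pq = ?phi q" by auto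
  have cq: "q \<in> carrier G" using subgroup.mem_carrier[OF Q q] .
  have a: "x0 \<otimes> conjm G g q \<in> P" using subgroup.m_closed[OF P x0 qP] .
  have b: "inv q \<otimes> y0 \<in> Q" using subgroup.m_closed[OF Q subgroup.m_inv_closed[OF Q q] y0] .
  have c: "x0 \<otimes> conjm G g q \<otimes> g \<otimes> (inv q \<otimes> y0) = x0 \<otimes> g \<otimes> y0"
    unfolding conjm_def using cq cx0 cy0 g by (simp add: m_assoc)
  show "pq \<in> ?F" unfolding pq using a b c by simp
qed

lemma DC_fiber_inj: assumes Q: "subgroup Q G" and y0: "y0 \<in> carrier G"
  shows "inj_on (\<lambda>q. (x0 \<otimes> conjm G g q, inv q \<otimes> y0)) Q"
proof (rule inj_onI)
  fix q q' assume q: "q \<in> Q" and q': "q' \<in> Q" and e: "(x0 \<otimes> conjm G g q, inv q \<otimes> y0) = (x0 \<otimes> conjm G g q', inv q' \<otimes> y0)"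
  have cq: "q \<in> carrier G" using subgroup.mem_carrier[OF Q q] .
  have cq': "q' \<in> carrier G" using subgroup.mem_carrier[OF Q q'] .
  have "inv q \<otimes> y0 = inv q' \<otimes> y0" using e by simp
  then have "inv q = inv q'" using cq cq' y0 by simp
  then show "q = q'" using cq cq' by (metis inv_inv)
qed

lemma DC_card: assumes P: "subgroup P G" and Q: "subgroup Q G" and g: "g \<in> carrier G"
  and fin: "finite (carrier G)"
  shows "card (DC P Q g) * card {q \<in> Q. conjm G g q \<in> P} = card P * card Q"
proof -
  define f where "f = (\<lambda>pq. fst pq \<otimes> g \<otimes> snd pq)"
  have finP: "finite P" using subgroup.subset[OF P] fin finite_subset by blast
  have finQ: "finite Q" using subgroup.subset[OF Q] fin finite_subset by blast
  have img: "f ` (P \<times> Q) = DC P Q g"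
  proof (rule equalityI; rule subsetI)
    fix z assume "z \<in> f ` (P \<times> Q)"
    then obtain x y where "x \<in> P" "y \<in> Q" "z = f (x, y)" by auto
    then show "z \<in> DC P Q g" unfolding DC_def f_def by auto
  next
    fix z assume "z \<in> DC P Q g"
    then have "\<exists>x y. z = x \<otimes> g \<otimes> y \<and> x \<in> P \<and> y \<in> Q" unfolding DC_def by simp
    then obtain x y where "x \<in> P" "y \<in> Q" "z = x \<otimes> g \<otimes> y" by blast
    then have "z = f (x, y)" "(x, y) \<in> P \<times> Q" unfolding f_def by auto
    then show "z \<in> f ` (P \<times> Q)" by (rule image_eqI)
  qed
  have "card P * card Q = card (P \<times> Q)" by (simp add: card_cartesian_product)
  also have "\<dots> = (\<Sum>pq\<in>P \<times> Q. (1::nat))" by simp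
  also have "\<dots> = (\<Sum>z\<in>f ` (P \<times> Q). \<Sum>pq\<in>{pq. pq \<in> P \<times> Q \<and> f pq = z}. (1::nat))"
    by (rule sum.image_gen) (simp add: finP finQ)
  also have "\<dots> = (\<Sum>z\<in>DC P Q g. card {q \<in> Q. conjm G g q \<in> P})"
  proof (rule sum.cong[OF img])
    fix z assume "z \<in> DC P Q g"
    then have "\<exists>x y. z = x \<otimes> g \<otimes> y \<and> x \<in> P \<and> y \<in> Q" unfolding DC_def by simp
    then obtain x0 y0 where x0: "x0 \<in> P" and y0: "y0 \<in> Q" and z: "z = x0 \<otimes> g \<otimes> y0" by blast
    have "{pq. pq \<in> P \<times> Q \<and> f pq = z} = {pq \<in> P \<times> Q. fst pq \<otimes> g \<otimes> snd pq = x0 \<otimes> g \<otimes> y0}"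
      unfolding f_def z by simp
    also have "\<dots> = (\<lambda>q. (x0 \<otimes> conjm G g q, inv q \<otimes> y0)) ` {q \<in> Q. conjm G g q \<in> P}"
      by (rule DC_fiber[OF P Q g x0 y0])
    finally have "card {pq. pq \<in> P \<times> Q \<and> f pq = z} = card {q \<in> Q. conjm G g q \<in> P}"
      using card_image[OF inj_on_subset[OF DC_fiber_inj[OF Q subgroup.mem_carrier[OF Q y0]]]] by auto
    then show "(\<Sum>pq\<in>{pq. pq \<in> P \<times> Q \<and> f pq = z}. (1::nat)) = card {q \<in> Q. conjm G g q \<in> P}" by simp
  qed
  also have "\<dots> = card (DC P Q g) * card {q \<in> Q. conjm G g q \<in> P}" by simp
  finally show ?thesis by simp
qed

lemma double_cosets_DC: "double_cosets G P Q = DC P Q ` carrier G"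
  unfolding double_cosets_def DC_def by simp

lemma DC_count: assumes P: "subgroup P G" and Q: "subgroup Q G" and fin: "finite (carrier G)"
  shows "card (double_cosets G P Q) * (card P * card Q) = (\<Sum>g\<in>carrier G. card {q \<in> Q. conjm G g q \<in> P})"
proof -
  let ?k = "\<lambda>g. card {q \<in> Q. conjm G g q \<in> P}"
  have "(\<Sum>g\<in>carrier G. ?k g) = (\<Sum>D\<in>(DC P Q ` carrier G). sum ?k {g. g \<in> carrier G \<and> DC P Q g = D})"
    by (rule sum.image_gen[OF fin])
  also have "\<dots> = (\<Sum>D\<in>(DC P Q ` carrier G). card P * card Q)"
  proof (rule sum.cong[OF refl])
    fix D assume "D \<in> DC P Q ` carrier G"
    then obtain g0 where g0: "g0 \<in> carrier G" and D: "D = DC P Q g0" by auto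
    have eq: "{g. g \<in> carrier G \<and> DC P Q g = D} = D"
    proof (rule equalityI; rule subsetI)
      fix g assume "g \<in> {g. g \<in> carrier G \<and> DC P Q g = D}"
      then show "g \<in> D" using DC_self[OF P Q] by auto
    next
      fix g assume g: "g \<in> D"
      have "g \<in> carrier G" using g DC_sub[OF P Q g0] D by auto
      moreover have "DC P Q g = D" using DC_eq[OF P Q g0] g D by simp
      ultimately show "g \<in> {g. g \<in> carrier G \<and> DC P Q g = D}" by simp
    qed
    have finD: "finite D" using DC_sub[OF P Q g0] D fin finite_subset by blast
    have pos: "card D > 0" using finD DC_self[OF P Q g0] D card_gt_0_iff by blast
    have "card D * (\<Sum>g\<in>D. ?k g) = (\<Sum>g\<in>D. card (DC P Q g) * ?k g)"
      by (simp add: sum_distrib_left) (rule sum.cong, auto simp: DC_eq[OF P Q g0] D)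
    also have "\<dots> = (\<Sum>g\<in>D. card P * card Q)"
    proof (rule sum.cong[OF refl])
      fix g assume "g \<in> D"
      then have "g \<in> carrier G" using DC_sub[OF P Q g0] D by auto
      then show "card (DC P Q g) * ?k g = card P * card Q" by (rule DC_card[OF P Q _ fin])
    qed
    also have "\<dots> = card D * (card P * card Q)" by simp
    finally have "(\<Sum>g\<in>D. ?k g) = card P * card Q" using pos by simp
    then show "(sum ?k {g. g \<in> carrier G \<and> DC P Q g = D}) = card P * card Q" unfolding eq .
  qed
  also have "\<dots> = card (double_cosets G P Q) * (card P * card Q)"
    unfolding double_cosets_DC by simp
  finally show ?thesis by simp
qed

definition alpha :: "'a set \<Rightarrow> 'a \<Rightarrow> nat" where
  "alpha P y = card {h \<in> carrier G. conjm G h y \<in> P}"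

lemma card_filter_sum: "finite A \<Longrightarrow> card {x \<in> A. Pr x} = (\<Sum>x\<in>A. if Pr x then 1 else 0)"
  using sum.inter_filter[of A "\<lambda>_. 1::nat" Pr] by simp

lemma alpha_sum: "finite (carrier G) \<Longrightarrow> alpha P y = (\<Sum>h\<in>carrier G. if conjm G h y \<in> P then 1 else 0)"
  unfolding alpha_def by (rule card_filter_sum)

lemma L3: assumes P: "subgroup P G" and Q: "subgroup Q G" and fin: "finite (carrier G)"
  shows "(\<Sum>g\<in>carrier G. card {q \<in> Q. conjm G g q \<in> P}) = (\<Sum>q\<in>Q. alpha P q)"
proof -
  have finQ: "finite Q" using subgroup.subset[OF Q] fin finite_subset by blast
  have "(\<Sum>g\<in>carrier G. card {q \<in> Q. conjm G g q \<in> P}) =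
        (\<Sum>g\<in>carrier G. \<Sum>q\<in>Q. if conjm G g q \<in> P then 1 else 0)"
    by (rule sum.cong[OF refl], rule card_filter_sum[OF finQ])
  also have "\<dots> = (\<Sum>q\<in>Q. \<Sum>g\<in>carrier G. if conjm G g q \<in> P then 1 else 0)"
    by (rule sum.swap)
  also have "\<dots> = (\<Sum>q\<in>Q. alpha P q)" using alpha_sum[OF fin] by simp
  finally show ?thesis .
qed

lemma L1: assumes y: "y \<in> carrier G" and k: "k \<in> carrier G"
  shows "alpha P (conjm G k y) = alpha P y"
proof -
  have eq: "{h \<in> carrier G. conjm G h y \<in> P} = (\<lambda>h. h \<otimes> k) ` {h \<in> carrier G. conjm G h (conjm G k y) \<in> P}"
  proof (rule equalityI; rule subsetI)
    fix h' assume "h' \<in> {h \<in> carrier G. conjm G h y \<in> P}"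
    then have h': "h' \<in> carrier G" "conjm G h' y \<in> P" by auto
    have "conjm G (h' \<otimes> inv k) (conjm G k y) = conjm G h' y"
      using h' y k by (simp add: conjm_mult[symmetric] m_assoc)
    then have "h' \<otimes> inv k \<in> {h \<in> carrier G. conjm G h (conjm G k y) \<in> P}" using h' k by simp
    moreover have "h' = (h' \<otimes> inv k) \<otimes> k" using h' k by (simp add: m_assoc)
    ultimately show "h' \<in> (\<lambda>h. h \<otimes> k) ` {h \<in> carrier G. conjm G h (conjm G k y) \<in> P}" by (rule rev_image_eqI)
  next
    fix h' assume "h' \<in> (\<lambda>h. h \<otimes> k) ` {h \<in> carrier G. conjm G h (conjm G k y) \<in> P}"
    then obtain h where h: "h \<in> carrier G" "conjm G h (conjm G k y) \<in> P" and e: "h' = h \<otimes> k" by auto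
    show "h' \<in> {h \<in> carrier G. conjm G h y \<in> P}" unfolding e using h k y by (simp add: conjm_mult)
  qed
  have inj: "inj_on (\<lambda>h. h \<otimes> k) {h \<in> carrier G. conjm G h (conjm G k y) \<in> P}"
    by (rule inj_onI) (use k in auto)
  show ?thesis unfolding alpha_def eq card_image[OF inj] ..
qed

lemma L2: assumes P: "subgroup P G" and fin: "finite (carrier G)"
  shows "(\<Sum>y\<in>carrier G. alpha P y * alpha Q y) = card (carrier G) * (\<Sum>x\<in>P. alpha Q x)"
proof -
  have "(\<Sum>y\<in>carrier G. alpha P y * alpha Q y) =
     (\<Sum>y\<in>carrier G. \<Sum>h\<in>carrier G. if conjm G h y \<in> P then alpha Q y else 0)"
    unfolding alpha_sum[OF fin, of P] sum_distrib_right
    by (rule sum.cong[OF refl], rule sum.cong[OF refl], simp)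
  also have "\<dots> = (\<Sum>h\<in>carrier G. \<Sum>y\<in>carrier G. if conjm G h y \<in> P then alpha Q y else 0)"
    by (rule sum.swap)
  also have "\<dots> = (\<Sum>h\<in>carrier G. \<Sum>x\<in>P. alpha Q x)"
  proof (rule sum.cong[OF refl])
    fix h assume h: "h \<in> carrier G"
    let ?A = "{y \<in> carrier G. conjm G h y \<in> P}"
    have img: "conjm G h ` ?A = P"
    proof (rule equalityI; rule subsetI)
      fix x assume "x \<in> conjm G h ` ?A" then show "x \<in> P" by auto
    next
      fix x assume x: "x \<in> P"
      have cx: "x \<in> carrier G" using subgroup.mem_carrier[OF P x] .
      have "conjm G (inv h) x \<in> ?A" using x cx h by simp
      moreover have "x = conjm G h (conjm G (inv h) x)" using cx h by simp
      ultimately show "x \<in> conjm G h ` ?A" by (rule rev_image_eqI)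
    qed
    have inj: "inj_on (conjm G h) ?A" using inj_on_subset[OF conjm_inj[OF h]] by auto
    have "(\<Sum>y\<in>carrier G. if conjm G h y \<in> P then alpha Q y else 0) = (\<Sum>y\<in>?A. alpha Q y)"
      using fin by (simp add: sum.inter_filter)
    also have "\<dots> = (\<Sum>y\<in>?A. alpha Q (conjm G h y))" by (rule sum.cong) (auto simp: L1 h)
    also have "\<dots> = (\<Sum>x\<in>P. alpha Q x)"
      using sum.reindex[OF inj, of "alpha Q"] img by simp
    finally show "(\<Sum>y\<in>carrier G. if conjm G h y \<in> P then alpha Q y else 0) = (\<Sum>x\<in>P. alpha Q x)" .
  qed
  also have "\<dots> = card (carrier G) * (\<Sum>x\<in>P. alpha Q x)" by simp
  finally show ?thesis .
qed

lemma DC_formula: assumes P: "subgroup P G" and Q: "subgroup Q G" and fin: "finite (carrier G)"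
  shows "card (double_cosets G P Q) * (card P * card Q) * card (carrier G) =
         (\<Sum>y\<in>carrier G. alpha P y * alpha Q y)"
proof -
  have "(\<Sum>y\<in>carrier G. alpha P y * alpha Q y) = (\<Sum>y\<in>carrier G. alpha Q y * alpha P y)"
    by (simp add: mult.commute)
  also have "\<dots> = card (carrier G) * (\<Sum>x\<in>Q. alpha P x)" by (rule L2[OF Q fin])
  also have "\<dots> = card (carrier G) * (\<Sum>g\<in>carrier G. card {q \<in> Q. conjm G g q \<in> P})"
    using L3[OF P Q fin] by simp
  also have "\<dots> = card (carrier G) * (card (double_cosets G P Q) * (card P * card Q))"
    using DC_count[OF P Q fin] by simp
  finally show ?thesis by simp
qed

definition beta :: "'a set \<Rightarrow> 'a set \<Rightarrow> nat" where
  "beta C P = card {h \<in> carrier G. conjm G h ` C \<subseteq> P}"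

lemma alpha_beta: "y \<in> carrier G \<Longrightarrow> subgroup P G \<Longrightarrow> alpha P y = beta (generate G {y}) P"
proof -
  assume y: "y \<in> carrier G" and P: "subgroup P G"
  have "{h \<in> carrier G. conjm G h y \<in> P} = {h \<in> carrier G. conjm G h ` generate G {y} \<subseteq> P}"
    using conjm_gen_sub[OF _ y P] by blast
  then show ?thesis unfolding alpha_def beta_def by simp
qed

lemma beta_conj: assumes A: "A \<subseteq> carrier G" and k: "k \<in> carrier G"
  shows "beta (conjm G k ` A) P = beta A P"
proof -
  have eq: "{h \<in> carrier G. conjm G h ` A \<subseteq> P} = (\<lambda>h. h \<otimes> k) ` {h \<in> carrier G. conjm G h ` (conjm G k ` A) \<subseteq> P}"
  proof (rule equalityI; rule subsetI)
    fix h' assume "h' \<in> {h \<in> carrier G. conjm G h ` A \<subseteq> P}"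
    then have h': "h' \<in> carrier G" "conjm G h' ` A \<subseteq> P" by auto
    have "conjm G (h' \<otimes> inv k) ` (conjm G k ` A) = conjm G h' ` A"
      using h' A k by (simp add: conjm_img_mult[symmetric] m_assoc)
    then have "h' \<otimes> inv k \<in> {h \<in> carrier G. conjm G h ` (conjm G k ` A) \<subseteq> P}" using h' k by simp
    moreover have "h' = (h' \<otimes> inv k) \<otimes> k" using h' k by (simp add: m_assoc)
    ultimately show "h' \<in> (\<lambda>h. h \<otimes> k) ` {h \<in> carrier G. conjm G h ` (conjm G k ` A) \<subseteq> P}" by (rule rev_image_eqI)
  next
    fix h' assume "h' \<in> (\<lambda>h. h \<otimes> k) ` {h \<in> carrier G. conjm G h ` (conjm G k ` A) \<subseteq> P}"
    then obtain h where h: "h \<in> carrier G" "conjm G h ` (conjm G k ` A) \<subseteq> P" and e: "h' = h \<otimes> k" by auto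
    show "h' \<in> {h \<in> carrier G. conjm G h ` A \<subseteq> P}" unfolding e using h k A by (simp add: conjm_img_mult)
  qed
  have inj: "inj_on (\<lambda>h. h \<otimes> k) {h \<in> carrier G. conjm G h ` (conjm G k ` A) \<subseteq> P}"
    by (rule inj_onI) (use k in auto)
  show ?thesis unfolding beta_def eq card_image[OF inj] ..
qed

definition conjto :: "'a set \<Rightarrow> 'a set \<Rightarrow> bool" where
  "conjto A B \<longleftrightarrow> (\<exists>g\<in>carrier G. B = conjm G g ` A)"

lemma conjto_refl: "A \<subseteq> carrier G \<Longrightarrow> conjto A A"
  unfolding conjto_def using conjm_img_one by (metis one_closed)

lemma conjto_sym: "A \<subseteq> carrier G \<Longrightarrow> conjto A B \<Longrightarrow> conjto B A"
  unfolding conjto_def using conjm_img_inv by (metis inv_closed)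

lemma conjto_trans: "A \<subseteq> carrier G \<Longrightarrow> conjto A B \<Longrightarrow> conjto B C \<Longrightarrow> conjto A C"
  unfolding conjto_def using conjm_img_mult by (metis m_closed)

lemma conjto_sub: "A \<subseteq> carrier G \<Longrightarrow> conjto A B \<Longrightarrow> B \<subseteq> carrier G"
  unfolding conjto_def by auto

lemma conjto_card: "A \<subseteq> carrier G \<Longrightarrow> conjto A B \<Longrightarrow> card B = card A"
  unfolding conjto_def using card_image inj_on_subset conjm_inj by metis

lemma beta_conjto: "A \<subseteq> carrier G \<Longrightarrow> conjto A B \<Longrightarrow> beta B P = beta A P"
  unfolding conjto_def using beta_conj by auto

end




lemma rank_sum_rank1:
  fixes f g :: "nat \<Rightarrow> nat \<Rightarrow> rat"
  shows "vec_space.rank n (mat n n (\<lambda>(i, j). \<Sum>l<s. f l i * g l j)) \<le> s"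
proof (induction s)
  case 0
  interpret vec_space "TYPE(rat)" n .
  have "mat n n (\<lambda>(i, j). \<Sum>l<0. f l i * g l j) = 0\<^sub>m n n" by (intro eq_matI) auto
  then show ?case by (simp only: rank_0I)
next
  case (Suc s)
  interpret vec_space "TYPE(rat)" n .
  have eq: "mat n n (\<lambda>(i, j). \<Sum>l<Suc s. f l i * g l j) =
        mat n n (\<lambda>(i, j). \<Sum>l<s. f l i * g l j) + mat n n (\<lambda>(i, j). f s i * g s j)"
    by (intro eq_matI) auto
  have "rank (mat n n (\<lambda>(i, j). f s i * g s j)) \<le> 1"
    by (rule rank_le_1_product_entries[where f="f s" and g="g s"]) auto
  moreover have "rank (mat n n (\<lambda>(i, j). \<Sum>l<Suc s. f l i * g l j)) \<le>
     rank (mat n n (\<lambda>(i, j). \<Sum>l<s. f l i * g l j)) + rank (mat n n (\<lambda>(i, j). f s i * g s j))"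
    unfolding eq by (rule rank_subadditive) auto
  ultimately show ?case using Suc.IH by simp
qed

locale dcm = group G for G :: "('a, 'b) monoid_scheme" +
  fixes S :: "'a set"
  assumes finG: "finite (carrier G)" and S: "subgroup S G"
begin

definition Rel :: "('a set \<times> 'a set) set" where
  "Rel = {(P, Q). P \<in> subs G S \<and> Q \<in> subs G S \<and> (\<exists>g\<in>carrier G. Q = conjm G g ` P)}"

lemma subs_sub: "P \<in> subs G S \<Longrightarrow> P \<subseteq> carrier G"
  unfolding subs_def using subgroup.subset by blast

lemma subs_subgroup: "P \<in> subs G S \<Longrightarrow> subgroup P G"
  unfolding subs_def by blast

lemma subs_S: "P \<in> subs G S \<Longrightarrow> P \<subseteq> S"
  unfolding subs_def by blast

lemma subs_finite: "P \<in> subs G S \<Longrightarrow> finite P"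
  using subs_sub finG finite_subset by blast

lemma subs_card_pos: "P \<in> subs G S \<Longrightarrow> card P > 0"
  using subs_finite subs_subgroup subgroup.one_closed card_gt_0_iff by blast

lemma finite_subs: "finite (subs G S)"
proof -
  have "subs G S \<subseteq> Pow (carrier G)" using subs_sub by blast
  then show ?thesis using finG finite_subset by blast
qed

lemma Rel_conjto: "(P, Q) \<in> Rel \<longleftrightarrow> P \<in> subs G S \<and> Q \<in> subs G S \<and> conjto P Q"
  unfolding Rel_def conjto_def by simp

lemma equiv_Rel: "equiv (subs G S) Rel"
proof (rule equivI)
  show "refl_on (subs G S) Rel"
  proof (rule refl_onI)
    fix x assume "x \<in> subs G S" then show "(x, x) \<in> Rel"
      unfolding Rel_conjto using conjto_refl[OF subs_sub] by blast
  qed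
  show "sym Rel"
    by (rule symI) (metis Rel_conjto conjto_sym subs_sub)
  show "trans Rel"
    by (rule transI) (metis Rel_conjto conjto_trans subs_sub)
  show "Rel \<subseteq> subs G S \<times> subs G S" by (auto simp: Rel_def)
qed

lemma G_conj_classes_Rel: "G_conj_classes G S = subs G S // Rel"
  unfolding G_conj_classes_def Rel_def ..

lemma finite_Cl: "finite (G_conj_classes G S)"
  unfolding G_conj_classes_Rel using finite_subs finite_quotient equiv_Rel equiv_type by blast

definition kk :: nat where "kk = card (G_conj_classes G S)"
definition ee :: "nat \<Rightarrow> 'a set set" where
  "ee = (SOME e. bij_betw e {0..<kk} (G_conj_classes G S))"
definition PP :: "nat \<Rightarrow> 'a set" where
  "PP i = (SOME P. P \<in> ee i)"

lemma ee_bij: "bij_betw ee {0..<kk} (G_conj_classes G S)"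
  unfolding ee_def kk_def using someI_ex[OF ex_bij_betw_nat_finite[OF finite_Cl]] .

lemma ee_in: "i < kk \<Longrightarrow> ee i \<in> subs G S // Rel"
  using ee_bij unfolding bij_betw_def G_conj_classes_Rel by auto

lemma ee_eq: assumes "i < kk" shows "PP i \<in> subs G S" "ee i = Rel `` {PP i}"
proof -
  obtain x where x: "x \<in> subs G S" "ee i = Rel `` {x}" using ee_in[OF assms] by (rule quotientE)
  have "x \<in> ee i" using x equiv_class_self[OF equiv_Rel] by simp
  then have "PP i \<in> ee i" unfolding PP_def by (rule someI)
  then have "(x, PP i) \<in> Rel" using x by simp
  then show "PP i \<in> subs G S" "ee i = Rel `` {PP i}" using x equiv_class_eq[OF equiv_Rel] by (auto simp: Rel_def)
qed

lemma PP_subs: "i < kk \<Longrightarrow> PP i \<in> subs G S" using ee_eq by blast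

lemma PP_uniq: assumes i: "i < kk" and j: "j < kk" and c: "conjto (PP i) (PP j)" shows "i = j"
proof -
  have "(PP i, PP j) \<in> Rel" using c PP_subs i j Rel_conjto by blast
  then have "ee i = ee j" using ee_eq[OF i] ee_eq[OF j] equiv_class_eq[OF equiv_Rel] by simp
  then show ?thesis using ee_bij i j unfolding bij_betw_def inj_on_def by auto
qed

lemma PP_exists: assumes Q: "Q \<in> subs G S" shows "\<exists>i<kk. conjto Q (PP i)"
proof -
  have "Rel `` {Q} \<in> G_conj_classes G S" unfolding G_conj_classes_Rel using Q by (rule quotientI)
  then have "Rel `` {Q} \<in> ee ` {0..<kk}" using ee_bij unfolding bij_betw_def by simp
  then obtain i where i: "i < kk" "ee i = Rel `` {Q}" by (metis atLeastLessThan_iff imageE)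
  have "PP i \<in> ee i" using ee_eq[OF i(1)] equiv_class_self[OF equiv_Rel] by simp
  then have "(Q, PP i) \<in> Rel" using i by simp
  then show ?thesis using i Rel_conjto by blast
qed

lemma cyc_subs: "cyclic_subs G S \<subseteq> subs G S"
proof
  fix P assume "P \<in> cyclic_subs G S"
  then obtain x where x: "x \<in> S" "P = generate G {x}" unfolding cyclic_subs_def by blast
  have xG: "x \<in> carrier G" using x subgroup.subset[OF S] by blast
  have "subgroup P G" using x xG generate_is_subgroup by simp
  moreover have "P \<subseteq> S" using x generate_subgroup_incl[OF _ S] by simp
  ultimately show "P \<in> subs G S" unfolding subs_def by simp
qed

lemma cyc_conj: assumes A: "A \<in> cyclic_subs G S" and B: "B \<in> subs G S" and c: "conjto A B"
  shows "B \<in> cyclic_subs G S"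
proof -
  obtain x where x: "x \<in> S" "A = generate G {x}" using A unfolding cyclic_subs_def by blast
  have xG: "x \<in> carrier G" using x subgroup.subset[OF S] by blast
  obtain g where g: "g \<in> carrier G" "B = conjm G g ` A" using c unfolding conjto_def by blast
  have "B = generate G {conjm G g x}" using g x conjm_generate[OF g(1) xG] by simp
  moreover have "conjm G g x \<in> B" using g x generate.incl[of x "{x}" G] by auto
  then have "conjm G g x \<in> S" using subs_S[OF B] by blast
  ultimately show ?thesis unfolding cyclic_subs_def by blast
qed

definition II :: "nat set" where "II = {i. i < kk \<and> PP i \<in> cyclic_subs G S}"
definition mm :: nat where "mm = card II"
definition CC :: "nat \<Rightarrow> 'a set" where "CC l = PP (pick II l)"

lemma finite_II: "finite II" unfolding II_def by simp

lemma pick_II: "l < mm \<Longrightarrow> pick II l \<in> II"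
  unfolding mm_def by (rule pick_in_set) simp

lemma CC_cyc: "l < mm \<Longrightarrow> CC l \<in> cyclic_subs G S"
  using pick_II unfolding CC_def II_def by blast

lemma CC_subs: "l < mm \<Longrightarrow> CC l \<in> subs G S"
  using CC_cyc cyc_subs by blast

lemma CC_sub: "l < mm \<Longrightarrow> CC l \<subseteq> carrier G"
  using CC_subs subs_sub by blast

lemma CC_uniq: assumes l: "l < mm" and l': "l' < mm" and c: "conjto (CC l) (CC l')" shows "l = l'"
proof -
  have "pick II l = pick II l'" using PP_uniq c pick_II[OF l] pick_II[OF l'] unfolding CC_def II_def by blast
  then show ?thesis using pick_mono[of l' II l] pick_mono[of l II l'] l l' unfolding mm_def
    by (metis less_irrefl nat_neq_iff)
qed

lemma CC_exists: assumes B: "B \<in> cyclic_subs G S" shows "\<exists>l<mm. conjto B (CC l)"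
proof -
  obtain i where i: "i < kk" "conjto B (PP i)" using PP_exists cyc_subs B by blast
  have "PP i \<in> cyclic_subs G S" using cyc_conj[OF B PP_subs[OF i(1)] i(2)] .
  then have iI: "i \<in> II" unfolding II_def using i by simp
  define l where "l = card {a \<in> II. a < i}"
  have "pick II l = i" unfolding l_def by (rule pick_card_in_set[OF iI])
  moreover have "l < mm" unfolding l_def mm_def
    by (rule psubset_card_mono[OF finite_II]) (use iI in auto)
  ultimately show ?thesis using i unfolding CC_def by auto
qed

lemma gen_sub: "y \<in> carrier G \<Longrightarrow> generate G {y} \<subseteq> carrier G"
  using generate_incl by simp

lemma PW_cases: assumes y: "y \<in> carrier G"
  shows "(\<exists>l<mm. conjto (generate G {y}) (CC l)) \<or> (\<forall>P\<in>subs G S. beta (generate G {y}) P = 0)"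
proof (rule disjCI)
  assume "\<not> (\<forall>P\<in>subs G S. beta (generate G {y}) P = 0)"
  then obtain P where P: "P \<in> subs G S" "beta (generate G {y}) P \<noteq> 0" by blast
  then have "{h \<in> carrier G. conjm G h ` generate G {y} \<subseteq> P} \<noteq> {}" unfolding beta_def by (metis card.empty)
  then obtain h where h: "h \<in> carrier G" "conjm G h ` generate G {y} \<subseteq> P" by blast
  define B where "B = conjm G h ` generate G {y}"
  have B: "B = generate G {conjm G h y}" unfolding B_def using conjm_generate[OF h(1) y] .
  have "conjm G h y \<in> B" unfolding B_def using generate.incl[of y "{y}" G] by auto
  then have "conjm G h y \<in> S" using h(2) subs_S[OF P(1)] unfolding B_def by blast
  then have Bc: "B \<in> cyclic_subs G S" unfolding cyclic_subs_def using B by blast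
  obtain l where l: "l < mm" "conjto B (CC l)" using CC_exists[OF Bc] by blast
  have "conjto (generate G {y}) B" unfolding conjto_def B_def using h by blast
  then have "conjto (generate G {y}) (CC l)" using conjto_trans[OF gen_sub[OF y]] l by blast
  then show "\<exists>l<mm. conjto (generate G {y}) (CC l)" using l by blast
qed

lemma PW_uniq: assumes A: "A \<subseteq> carrier G" and l: "l < mm" and l': "l' < mm"
  and c: "conjto A (CC l)" and c': "conjto A (CC l')" shows "l = l'"
proof -
  have "conjto (CC l) A" using conjto_sym[OF A c] .
  then have "conjto (CC l) (CC l')" using conjto_trans[OF CC_sub[OF l]] c' by blast
  then show ?thesis using CC_uniq l l' by blast
qed

lemma prod_expand: assumes y: "y \<in> carrier G" and P: "P \<in> subs G S" and Q: "Q \<in> subs G S"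
  shows "alpha P y * alpha Q y = (\<Sum>l<mm. if conjto (generate G {y}) (CC l) then beta (CC l) P * beta (CC l) Q else 0)"
proof -
  have aP: "alpha P y = beta (generate G {y}) P" using alpha_beta[OF y subs_subgroup[OF P]] .
  have aQ: "alpha Q y = beta (generate G {y}) Q" using alpha_beta[OF y subs_subgroup[OF Q]] .
  show ?thesis
  proof (cases "\<exists>l<mm. conjto (generate G {y}) (CC l)")
    case True
    then obtain l0 where l0: "l0 < mm" "conjto (generate G {y}) (CC l0)" by blast
    have "(\<Sum>l<mm. if conjto (generate G {y}) (CC l) then beta (CC l) P * beta (CC l) Q else 0) =
          (\<Sum>l<mm. if l = l0 then beta (CC l) P * beta (CC l) Q else 0)"
    proof (rule sum.cong[OF refl])
      fix l assume "l \<in> {..<mm}"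
      then have "l < mm" by simp
      then have "conjto (generate G {y}) (CC l) \<longleftrightarrow> l = l0"
        using PW_uniq[OF gen_sub[OF y] _ l0(1) _ l0(2)] l0(2) by blast
      then show "(if conjto (generate G {y}) (CC l) then beta (CC l) P * beta (CC l) Q else 0) =
          (if l = l0 then beta (CC l) P * beta (CC l) Q else 0)" by simp
    qed
    also have "\<dots> = beta (CC l0) P * beta (CC l0) Q" using l0 by simp
    also have "\<dots> = alpha P y * alpha Q y" unfolding aP aQ
      using beta_conjto[OF gen_sub[OF y] l0(2)] by simp
    finally show ?thesis by simp
  next
    case False
    then have "\<forall>P\<in>subs G S. beta (generate G {y}) P = 0" using PW_cases[OF y] by blast
    then have "alpha P y = 0" using aP P by simp
    moreover have "(\<Sum>l<mm. if conjto (generate G {y}) (CC l) then beta (CC l) P * beta (CC l) Q else 0) = 0"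
      using False by (intro sum.neutral) auto
    ultimately show ?thesis by simp
  qed
qed

definition NN :: "nat \<Rightarrow> nat" where
  "NN l = card {y \<in> carrier G. conjto (generate G {y}) (CC l)}"

lemma NN_pos: assumes l: "l < mm" shows "NN l > 0"
proof -
  obtain x where x: "x \<in> S" "CC l = generate G {x}" using CC_cyc[OF l] unfolding cyclic_subs_def by blast
  have xG: "x \<in> carrier G" using x subgroup.subset[OF S] by blast
  have "conjto (generate G {x}) (CC l)" using x conjto_refl[OF gen_sub[OF xG]] by simp
  then have "x \<in> {y \<in> carrier G. conjto (generate G {y}) (CC l)}" using xG by simp
  then show ?thesis unfolding NN_def using finG card_gt_0_iff by fastforce
qed

lemma sum_expand: assumes P: "P \<in> subs G S" and Q: "Q \<in> subs G S"
  shows "(\<Sum>y\<in>carrier G. alpha P y * alpha Q y) = (\<Sum>l<mm. beta (CC l) P * beta (CC l) Q * NN l)"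
proof -
  have "(\<Sum>y\<in>carrier G. alpha P y * alpha Q y) =
    (\<Sum>y\<in>carrier G. \<Sum>l<mm. if conjto (generate G {y}) (CC l) then beta (CC l) P * beta (CC l) Q else 0)"
    using prod_expand[OF _ P Q] by simp
  also have "\<dots> = (\<Sum>l<mm. \<Sum>y\<in>carrier G. if conjto (generate G {y}) (CC l) then beta (CC l) P * beta (CC l) Q else 0)"
    by (rule sum.swap)
  also have "\<dots> = (\<Sum>l<mm. beta (CC l) P * beta (CC l) Q * NN l)"
  proof (rule sum.cong[OF refl])
    fix l
    have "(\<Sum>y\<in>carrier G. if conjto (generate G {y}) (CC l) then beta (CC l) P * beta (CC l) Q else 0) =
       (\<Sum>y\<in>carrier G. beta (CC l) P * beta (CC l) Q * (if conjto (generate G {y}) (CC l) then 1 else 0))"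
      by (rule sum.cong) auto
    also have "\<dots> = beta (CC l) P * beta (CC l) Q * NN l"
      unfolding NN_def card_filter_sum[OF finG] sum_distrib_left ..
    finally show "(\<Sum>y\<in>carrier G. if conjto (generate G {y}) (CC l) then beta (CC l) P * beta (CC l) Q else 0) =
       beta (CC l) P * beta (CC l) Q * NN l" .
  qed
  finally show ?thesis .
qed


definition uu :: "nat \<Rightarrow> 'a set \<Rightarrow> rat" where
  "uu l P = of_nat (beta (CC l) P) / of_nat (card P)"
definition ww :: "nat \<Rightarrow> rat" where
  "ww l = of_nat (NN l) / of_nat (card (carrier G))"

lemma entry_formula: assumes P: "P \<in> subs G S" and Q: "Q \<in> subs G S"
  shows "(of_nat (card (double_cosets G P Q)) :: rat) = (\<Sum>l<mm. uu l P * ww l * uu l Q)"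
proof -
  have E: "card (double_cosets G P Q) * (card P * card Q) * card (carrier G) =
        (\<Sum>l<mm. beta (CC l) P * beta (CC l) Q * NN l)"
    using DC_formula[OF subs_subgroup[OF P] subs_subgroup[OF Q] finG] sum_expand[OF P Q] by simp
  have E': "(of_nat (card (double_cosets G P Q)) :: rat) * (of_nat (card P) * of_nat (card Q) * of_nat (card (carrier G))) =
        (\<Sum>l<mm. of_nat (beta (CC l) P) * of_nat (beta (CC l) Q) * of_nat (NN l))"
    using arg_cong[OF E, of "of_nat :: nat \<Rightarrow> rat"] by (simp only: of_nat_mult of_nat_sum)
  have p1: "(of_nat (card P) :: rat) \<noteq> 0" using subs_card_pos[OF P] by simp
  have p2: "(of_nat (card Q) :: rat) \<noteq> 0" using subs_card_pos[OF Q] by simp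
  have "card (carrier G) > 0" using finG one_closed card_gt_0_iff by blast
  then have p3: "(of_nat (card (carrier G)) :: rat) \<noteq> 0" by simp
  define D where "D = (of_nat (card P) * of_nat (card Q) * of_nat (card (carrier G)) :: rat)"
  have D: "D \<noteq> 0" unfolding D_def using p1 p2 p3 by simp
  have "(of_nat (card (double_cosets G P Q)) :: rat) =
        (\<Sum>l<mm. of_nat (beta (CC l) P) * of_nat (beta (CC l) Q) * of_nat (NN l)) / D"
    using E' D unfolding D_def[symmetric] by (simp add: eq_divide_eq)
  also have "\<dots> = (\<Sum>l<mm. of_nat (beta (CC l) P) * of_nat (beta (CC l) Q) * of_nat (NN l) / D)"
    by (rule sum_divide_distrib)
  also have "\<dots> = (\<Sum>l<mm. uu l P * ww l * uu l Q)"
    unfolding uu_def ww_def D_def by (rule sum.cong[OF refl]) (simp add: ac_simps)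
  finally show ?thesis .
qed

lemma uu_self_nz: assumes l: "l < mm" shows "uu l (CC l) \<noteq> 0"
proof -
  have "\<one>\<^bsub>G\<^esub> \<in> {h \<in> carrier G. conjm G h ` CC l \<subseteq> CC l}" using conjm_img_one[OF CC_sub[OF l]] by simp
  then have "beta (CC l) (CC l) > 0" unfolding beta_def using finG card_gt_0_iff by fastforce
  moreover have "card (CC l) > 0" using subs_card_pos[OF CC_subs[OF l]] .
  ultimately show ?thesis unfolding uu_def by simp
qed

lemma uu_zero: assumes l: "l < mm" and l0: "l0 < mm" and le: "card (CC l0) \<le> card (CC l)" and ne: "l \<noteq> l0"
  shows "uu l (CC l0) = 0"
proof (rule ccontr)
  assume "uu l (CC l0) \<noteq> 0"
  then have "beta (CC l) (CC l0) \<noteq> 0" unfolding uu_def by auto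
  then have "{h \<in> carrier G. conjm G h ` CC l \<subseteq> CC l0} \<noteq> {}" unfolding beta_def by (metis card.empty)
  then obtain h where h: "h \<in> carrier G" "conjm G h ` CC l \<subseteq> CC l0" by blast
  have c: "conjto (CC l) (conjm G h ` CC l)" unfolding conjto_def using h by blast
  have "card (conjm G h ` CC l) = card (CC l)" using conjto_card[OF CC_sub[OF l] c] .
  then have "conjm G h ` CC l = CC l0" using card_seteq[OF subs_finite[OF CC_subs[OF l0]] h(2)] le by simp
  then have "conjto (CC l) (CC l0)" using c by simp
  then show False using CC_uniq[OF l l0] ne by blast
qed

lemma det_nz: assumes z: "\<And>l. l < mm \<Longrightarrow> z l \<noteq> 0"
  shows "det (mat mm mm (\<lambda>(a, l). uu l (CC a) * z l)) \<noteq> 0"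
proof
  let ?A = "mat mm mm (\<lambda>(a, l). uu l (CC a) * z l)"
  have A: "?A \<in> carrier_mat mm mm" by simp
  assume "det ?A = 0"
  then obtain v where v: "v \<in> carrier_vec mm" "v \<noteq> 0\<^sub>v mm" "?A *\<^sub>v v = 0\<^sub>v mm"
    using det_0_iff_vec_prod_zero_field[OF A] by blast
  have "\<exists>l. l < mm \<and> v $ l \<noteq> 0"
  proof (rule ccontr)
    assume "\<not> (\<exists>l. l < mm \<and> v $ l \<noteq> 0)"
    then have "v = 0\<^sub>v mm" using v(1) by (intro eq_vecI) auto
    then show False using v(2) by simp
  qed
  then obtain l0 where l0: "l0 < mm \<and> v $ l0 \<noteq> 0" and min: "\<forall>l. l < mm \<and> v $ l \<noteq> 0 \<longrightarrow> card (CC l0) \<le> card (CC l)"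
    using ex_has_least_nat[of "\<lambda>l. l < mm \<and> v $ l \<noteq> 0" _ "\<lambda>l. card (CC l)"] by blast
  have "(?A *\<^sub>v v) $ l0 = (\<Sum>l\<in>{0..<mm}. uu l (CC l0) * z l * v $ l)"
    using l0 v(1) by (simp add: mult_mat_vec_def scalar_prod_def)
  also have "\<dots> = (\<Sum>l\<in>{0..<mm}. if l = l0 then uu l (CC l0) * z l * v $ l else 0)"
  proof (rule sum.cong[OF refl])
    fix l assume "l \<in> {0..<mm}"
    then have l: "l < mm" by simp
    show "uu l (CC l0) * z l * v $ l = (if l = l0 then uu l (CC l0) * z l * v $ l else 0)"
    proof (cases "l = l0 \<or> v $ l = 0")
      case True then show ?thesis by auto
    next
      case False
      then have "uu l (CC l0) = 0" using uu_zero[OF l _ _] l0 min l by auto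
      then show ?thesis using False by simp
    qed
  qed
  also have "\<dots> = uu l0 (CC l0) * z l0 * v $ l0" using l0 by simp
  finally have "(?A *\<^sub>v v) $ l0 = uu l0 (CC l0) * z l0 * v $ l0" .
  moreover have "uu l0 (CC l0) * z l0 * v $ l0 \<noteq> 0" using uu_self_nz z l0 by simp
  moreover have "(?A *\<^sub>v v) $ l0 = 0" using v(3) l0 by simp
  ultimately show False by simp
qed

definition MM :: "rat mat" where
  "MM = mat kk kk (\<lambda>(i, j). of_nat (card (double_cosets G (PP i) (PP j))))"

lemma MM_eq: "double_coset_matrix G S = MM"
  unfolding double_coset_matrix_def Let_def MM_def PP_def ee_def kk_def ..

lemma MM_sum: "MM = mat kk kk (\<lambda>(i, j). \<Sum>l<mm. (uu l (PP i) * ww l) * uu l (PP j))"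
  unfolding MM_def by (intro eq_matI) (auto simp: entry_formula PP_subs)

lemma rank_le: "vec_space.rank kk MM \<le> mm"
  unfolding MM_sum by (rule rank_sum_rank1)

lemma II_sub: "{i. i < kk \<and> i \<in> II} = II" unfolding II_def by auto

lemma rank_ge: "mm \<le> vec_space.rank kk MM"
proof -
  interpret vec_space "TYPE(rat)" kk .
  let ?X = "mat mm mm (\<lambda>(a, l). uu l (CC a) * ww l)"
  let ?T = "mat mm mm (\<lambda>(a, l). uu l (CC a) * 1)"
  have sub: "submatrix MM II II = ?X * transpose_mat ?T"
  proof (rule eq_matI)
    show "dim_row (submatrix MM II II) = dim_row (?X * transpose_mat ?T)"
      by (simp add: dim_submatrix MM_def II_sub mm_def)
    show "dim_col (submatrix MM II II) = dim_col (?X * transpose_mat ?T)"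
      by (simp add: dim_submatrix MM_def II_sub mm_def)
    fix a b assume a: "a < dim_row (?X * transpose_mat ?T)" and b: "b < dim_col (?X * transpose_mat ?T)"
    then have a': "a < mm" and b': "b < mm" by auto
    have "submatrix MM II II $$ (a, b) = MM $$ (pick II a, pick II b)"
      unfolding submatrix_def using a' b' by (simp add: MM_def II_sub mm_def)
    also have "\<dots> = of_nat (card (double_cosets G (CC a) (CC b)))"
      unfolding MM_def CC_def using pick_II[OF a'] pick_II[OF b'] by (auto simp: II_def)
    also have "\<dots> = (\<Sum>l<mm. uu l (CC a) * ww l * uu l (CC b))"
      by (rule entry_formula[OF CC_subs[OF a'] CC_subs[OF b']])
    also have "\<dots> = (?X * transpose_mat ?T) $$ (a, b)"
      using a' b' by (simp add: scalar_prod_def lessThan_atLeast0)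
    finally show "submatrix MM II II $$ (a, b) = (?X * transpose_mat ?T) $$ (a, b)" .
  qed
  have "det ?X \<noteq> 0" by (rule det_nz) (use one_closed in \<open>auto simp add: ww_def NN_pos finG card_gt_0_iff\<close>)
  moreover have "det ?T \<noteq> 0" by (rule det_nz) simp
  ultimately have detnz: "det (submatrix MM II II) \<noteq> 0"
    unfolding sub by (simp add: det_mult[of _ mm] det_transpose[of _ mm])
  have MMc: "MM \<in> carrier_mat kk kk" by (simp add: MM_def)
  have "card {j. j < kk \<and> j \<in> II} \<le> rank MM"
    using rank_gt_minor[OF MMc detnz] .
  then show ?thesis unfolding II_sub mm_def .
qed

lemma rank_eq: "vec_space.rank kk (double_coset_matrix G S) = mm"
  using rank_le rank_ge MM_eq by simp

lemma F_conj_iff: assumes R: "realizes G S Hom" and P: "P \<in> subs G S" and Q: "Q \<in> subs G S"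
  shows "F_conjugate Hom P Q \<longleftrightarrow> conjto P Q"
proof -
  have H: "Hom P Q = {cmap G g P | g. g \<in> carrier G \<and> conjm G g ` P \<subseteq> Q}"
    using R P Q unfolding realizes_def by blast
  have img: "cmap G g P ` P = conjm G g ` P" for g
    unfolding cmap_def by (rule image_cong) auto
  show ?thesis
  proof
    assume "F_conjugate Hom P Q"
    then obtain \<phi> where "\<phi> \<in> Hom P Q" "\<phi> ` P = Q" unfolding F_conjugate_def by blast
    then obtain g where "g \<in> carrier G" "\<phi> = cmap G g P" using H by blast
    then show "conjto P Q" unfolding conjto_def using img \<open>\<phi> ` P = Q\<close> by auto
  next
    assume "conjto P Q"
    then obtain g where g: "g \<in> carrier G" "Q = conjm G g ` P" unfolding conjto_def by blast
    then have "cmap G g P \<in> Hom P Q" using H by blast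
    then show "F_conjugate Hom P Q" unfolding F_conjugate_def using img g by blast
  qed
qed

lemma card_F_classes: assumes R: "realizes G S Hom" shows "card (F_classes_cyclic G S Hom) = mm"
proof -
  let ?RF = "{(P, Q). P \<in> cyclic_subs G S \<and> Q \<in> cyclic_subs G S \<and> F_conjugate Hom P Q}"
  have cl: "?RF `` {P} = Rel `` {P}" if P: "P \<in> cyclic_subs G S" for P
  proof (rule equalityI; rule subsetI)
    fix Q assume "Q \<in> ?RF `` {P}"
    then have "Q \<in> cyclic_subs G S" "F_conjugate Hom P Q" by auto
    then show "Q \<in> Rel `` {P}" using F_conj_iff[OF R] cyc_subs P Rel_conjto by blast
  next
    fix Q assume "Q \<in> Rel `` {P}"
    then have Q: "Q \<in> subs G S" "conjto P Q" using Rel_conjto by auto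
    then have "Q \<in> cyclic_subs G S" using cyc_conj P by blast
    moreover have "F_conjugate Hom P Q" using F_conj_iff[OF R] cyc_subs P Q by blast
    ultimately show "Q \<in> ?RF `` {P}" using P by simp
  qed
  have F: "F_classes_cyclic G S Hom = (\<lambda>P. Rel `` {P}) ` cyclic_subs G S"
    unfolding F_classes_cyclic_def quotient_def using cl by auto
  have E: "ee ` II = (\<lambda>P. Rel `` {P}) ` cyclic_subs G S"
  proof (rule equalityI; rule subsetI)
    fix Dd assume "Dd \<in> ee ` II"
    then obtain i where i: "i \<in> II" "Dd = ee i" by blast
    then have "i < kk" "PP i \<in> cyclic_subs G S" unfolding II_def by auto
    then show "Dd \<in> (\<lambda>P. Rel `` {P}) ` cyclic_subs G S" using ee_eq i by blast
  next
    fix Dd assume "Dd \<in> (\<lambda>P. Rel `` {P}) ` cyclic_subs G S"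
    then obtain P where P: "P \<in> cyclic_subs G S" "Dd = Rel `` {P}" by blast
    obtain l where l: "l < mm" "conjto P (CC l)" using CC_exists[OF P(1)] by blast
    have "(P, CC l) \<in> Rel" using Rel_conjto l cyc_subs P CC_subs by blast
    then have "Dd = Rel `` {CC l}" using P equiv_class_eq[OF equiv_Rel] by simp
    also have "\<dots> = ee (pick II l)" unfolding CC_def using ee_eq pick_II[OF l(1)] unfolding II_def by auto
    finally show "Dd \<in> ee ` II" using pick_II[OF l(1)] by blast
  qed
  have "inj_on ee {0..<kk}" using ee_bij unfolding bij_betw_def by blast
  then have "inj_on ee II" by (rule inj_on_subset) (auto simp: II_def)
  then have "card (ee ` II) = mm" unfolding mm_def by (rule card_image)
  then show ?thesis using F E by simp
qed

end


theorem theorem1p2: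
  fixes G :: "('a, 'b) monoid_scheme" and S :: "'a set" and p :: nat
    and Hom :: "'a set \<Rightarrow> 'a set \<Rightarrow> ('a \<Rightarrow> 'a) set"
  assumes "Factorial_Ring.prime p"
    and "group G" and "finite (carrier G)"
    and "subgroup S G" and "\<exists>n. card S = p ^ n"
    and "fusion_system G S Hom" and "saturated p G S Hom"
    and "realizes G S Hom"
  shows "vec_space.rank (card (G_conj_classes G S)) (double_coset_matrix G S)
           = card (F_classes_cyclic G S Hom)"
proof -
  interpret dcm G S
    using assms(2,3,4) by (simp add: dcm_def dcm_axioms_def)
  show ?thesis using rank_eq card_F_classes[OF assms(8)] unfolding kk_def by simp
qed


end
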